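(* Let $\Delta$ be a mesh and let $A\le B$ be discrete quasi-copulas on $\Delta$. Then there exists a discrete copula $C$ on $\Delta$ with $A\le C\le B$ if and only if $L^{(A,B)}(R)\ge0$ for all $R\in\mathfrak{R}$, where $\mathfrak{R}$ consists of finite formal unions of rectangles with corners in $\Delta$.
   Context: A mesh is $\Delta=\delta_x\times\delta_y$ with $\delta_x=\{0=x_0<\dots<x_p=1\}$, $\delta_y=\{0=y_0<\dots<y_q=1\}$. For $Q:\Delta\to\mathbb{R}$ and a rectangle $[s_1,s_2]\times[t_1,t_2]$ with corners in $\Delta$, $V_Q=Q(s_1,t_1)+Q(s_2,t_2)-Q(s_2,t_1)-Q(s_1,t_2)$. $Q$ is a discrete copula if it is grounded ($Q(x,0)=Q(0,y)=0$), has neutral element $1$ ($Q(x,1)=x$, $Q(1,y)=y$) and $V_Q(R)\ge0$ for all rectangles with corners in $\Delta$; a discrete quasi-copula if grounded, with neutral element 1, and $V_Q(R)\ge0$ for all rectangles with corners in $\Delta$ having a side on the boundary of $[0,1]^2$. A rectangle here is nondegenerate ($s_1<s_2$, $t_1<t_2$); main corners: southwest and northeast; opposite corners: southeast and northwest. $\mathfrak{R}$: finite formal unions $R=R_1\sqcup\dots\sqcup R_n$ of such rectangles (repetitions allowed), with multiplicity $m_R(\mathbf{y})=\sum_i m_{R_i}(\mathbf{y})$, where $m_{R_i}(\mathbf{y})$ is $1$ at main corners, $-1$ at opposite corners, $0$ elsewhere. $L^{(A,B)}(R)=\sum_{m_R(\mathbf{y})>0}B(\mathbf{y})m_R(\mathbf{y})+\sum_{m_R(\mathbf{y})<0}A(\mathbf{y})m_R(\mathbf{y})$.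 *)

theory Defs
  imports Complex_Main "HOL-Library.Multiset"
begin

text \<open>A one-dimensional grid 0 = x_0 < ... < x_p = 1, represented by its finite set of points.\<close>
definition grid :: "real set \<Rightarrow> bool" where
  "grid X \<longleftrightarrow> finite X \<and> 0 \<in> X \<and> 1 \<in> X \<and> X \<subseteq> {0..1}"

definition mesh :: "real set \<Rightarrow> real set \<Rightarrow> bool" where
  "mesh X Y \<longleftrightarrow> grid X \<and> grid Y"

text \<open>A rectangle [s1,s2] \<times> [t1,t2] is encoded as ((s1,s2),(t1,t2)).\<close>
type_synonym rect = "(real \<times> real) \<times> (real \<times> real)"

definition is_rect :: "real set \<Rightarrow> real set \<Rightarrow> rect \<Rightarrow> bool" where
  "is_rect X Y R \<longleftrightarrow> (case R of ((s1,s2),(t1,t2)) \<Rightarrow>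
      s1 \<in> X \<and> s2 \<in> X \<and> t1 \<in> Y \<and> t2 \<in> Y \<and> s1 < s2 \<and> t1 < t2)"

definition Vol :: "(real \<Rightarrow> real \<Rightarrow> real) \<Rightarrow> rect \<Rightarrow> real" where
  "Vol Q R = (case R of ((s1,s2),(t1,t2)) \<Rightarrow> Q s1 t1 + Q s2 t2 - Q s2 t1 - Q s1 t2)"

definition grounded :: "real set \<Rightarrow> real set \<Rightarrow> (real \<Rightarrow> real \<Rightarrow> real) \<Rightarrow> bool" where
  "grounded X Y Q \<longleftrightarrow> (\<forall>x\<in>X. Q x 0 = 0) \<and> (\<forall>y\<in>Y. Q 0 y = 0)"

definition neutral_one :: "real set \<Rightarrow> real set \<Rightarrow> (real \<Rightarrow> real \<Rightarrow> real) \<Rightarrow> bool" where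
  "neutral_one X Y Q \<longleftrightarrow> (\<forall>x\<in>X. Q x 1 = x) \<and> (\<forall>y\<in>Y. Q 1 y = y)"

definition boundary_rect :: "rect \<Rightarrow> bool" where
  "boundary_rect R \<longleftrightarrow> (case R of ((s1,s2),(t1,t2)) \<Rightarrow> s1 = 0 \<or> s2 = 1 \<or> t1 = 0 \<or> t2 = 1)"

definition discrete_copula :: "real set \<Rightarrow> real set \<Rightarrow> (real \<Rightarrow> real \<Rightarrow> real) \<Rightarrow> bool" where
  "discrete_copula X Y Q \<longleftrightarrow> grounded X Y Q \<and> neutral_one X Y Q \<and>
     (\<forall>R. is_rect X Y R \<longrightarrow> Vol Q R \<ge> 0)"

definition discrete_quasi_copula :: "real set \<Rightarrow> real set \<Rightarrow> (real \<Rightarrow> real \<Rightarrow> real) \<Rightarrow> bool" where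
  "discrete_quasi_copula X Y Q \<longleftrightarrow> grounded X Y Q \<and> neutral_one X Y Q \<and>
     (\<forall>R. is_rect X Y R \<and> boundary_rect R \<longrightarrow> Vol Q R \<ge> 0)"

definition mult_rect :: "rect \<Rightarrow> real \<times> real \<Rightarrow> int" where
  "mult_rect R p = (case R of ((s1,s2),(t1,t2)) \<Rightarrow>
      if p = (s1,t1) \<or> p = (s2,t2) then 1
      else if p = (s2,t1) \<or> p = (s1,t2) then -1 else 0)"

text \<open>A finite formal union of rectangles (repetitions allowed) is a multiset of rectangles.\<close>
definition mult :: "rect multiset \<Rightarrow> real \<times> real \<Rightarrow> int" where
  "mult Rs p = (\<Sum>R\<in>#Rs. mult_rect R p)"

definition Lfun :: "real set \<Rightarrow> real set \<Rightarrow> (real \<Rightarrow> real \<Rightarrow> real) \<Rightarrow> (real \<Rightarrow> real \<Rightarrow> real)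
                     \<Rightarrow> rect multiset \<Rightarrow> real" where
  "Lfun X Y A B Rs =
     (\<Sum>p\<in>{p\<in>X \<times> Y. mult Rs p > 0}. B (fst p) (snd p) * of_int (mult Rs p)) +
     (\<Sum>p\<in>{p\<in>X \<times> Y. mult Rs p < 0}. A (fst p) (snd p) * of_int (mult Rs p))"

end

theory Submission
  imports Defs
begin

type_synonym 'v cstr = "('v \<Rightarrow> int) \<times> real"

definition cadd :: "'v cstr \<Rightarrow> 'v cstr \<Rightarrow> 'v cstr" where
  "cadd c d = ((\<lambda>u. fst c u + fst d u), snd c + snd d)"

definition czero :: "'v cstr" where "czero = ((\<lambda>u. 0), 0)"

definition cscale :: "nat \<Rightarrow> 'v cstr \<Rightarrow> 'v cstr" where
  "cscale k c = ((\<lambda>u. int k * fst c u), real k * snd c)"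

inductive_set gen :: "'v cstr set \<Rightarrow> 'v cstr set" for S where
  gen_zero: "czero \<in> gen S"
| gen_step: "c \<in> S \<Longrightarrow> z \<in> gen S \<Longrightarrow> cadd c z \<in> gen S"

lemma cadd_assoc: "cadd (cadd a b) c = cadd a (cadd b c)"
  by (simp add: cadd_def algebra_simps)

lemma cadd_zero: "cadd czero c = c"
  by (simp add: cadd_def czero_def)

lemma gen_add: "z1 \<in> gen S \<Longrightarrow> z2 \<in> gen S \<Longrightarrow> cadd z1 z2 \<in> gen S"
  by (induction z1 rule: gen.induct) (auto simp: cadd_zero cadd_assoc intro: gen.intros)

lemma gen_base: "c \<in> S \<Longrightarrow> c \<in> gen S"
proof -
  assume "c \<in> S"
  then have "cadd c czero \<in> gen S" by (intro gen.intros)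
  then show ?thesis by (simp add: cadd_def czero_def)
qed

lemma gen_scale: "z \<in> gen S \<Longrightarrow> cscale k z \<in> gen S"
proof (induction k)
  case 0
  have "cscale 0 z = czero" by (simp add: cscale_def czero_def)
  then show ?case using gen_zero by simp
next
  case (Suc k)
  have "cscale (Suc k) z = cadd z (cscale k z)"
    by (simp add: cscale_def cadd_def algebra_simps)
  then show ?case using Suc gen_add by simp
qed

lemma gen_mono': "z \<in> gen S' \<Longrightarrow> S' \<subseteq> gen S \<Longrightarrow> z \<in> gen S"
  by (induction z rule: gen.induct) (auto intro: gen.intros gen_add)

lemma gen_mono: "S' \<subseteq> gen S \<Longrightarrow> z \<in> gen S' \<Longrightarrow> z \<in> gen S"
  using gen_mono' by blast

lemma gen_zero_coord: "z \<in> gen S \<Longrightarrow> \<forall>c\<in>S. fst c v = 0 \<Longrightarrow> fst z v = 0"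
  by (induction z rule: gen.induct) (auto simp: czero_def cadd_def)

definition lhs :: "'v set \<Rightarrow> ('v \<Rightarrow> real) \<Rightarrow> 'v cstr \<Rightarrow> real" where
  "lhs V x c = (\<Sum>u\<in>V. of_int (fst c u) * x u)"

definition sat :: "'v set \<Rightarrow> ('v \<Rightarrow> real) \<Rightarrow> 'v cstr \<Rightarrow> bool" where
  "sat V x c \<longleftrightarrow> lhs V x c \<le> snd c"

lemma snd_cadd[simp]: "snd (cadd c d) = snd c + snd d" by (simp add: cadd_def)
lemma snd_cscale[simp]: "snd (cscale k c) = real k * snd c" by (simp add: cscale_def)

lemma lhs_cadd: "lhs V x (cadd c d) = lhs V x c + lhs V x d"
  by (simp add: lhs_def cadd_def algebra_simps sum.distrib)

lemma lhs_cscale: "lhs V x (cscale k c) = real k * lhs V x c"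
  by (simp add: lhs_def cscale_def sum_distrib_left algebra_simps)

lemma lhs_insert: "finite V \<Longrightarrow> v \<notin> V \<Longrightarrow>
   lhs (insert v V) (x(v:=t)) c = of_int (fst c v) * t + lhs V x c"
  unfolding lhs_def by (simp, intro sum.cong) auto

lemma FM:
  fixes V :: "'v set"
  assumes "finite V"
  shows "finite S \<Longrightarrow> \<not>(\<exists>x. \<forall>c\<in>S. sat V x c) \<Longrightarrow>
     \<exists>z\<in>gen S. (\<forall>v\<in>V. fst z v = 0) \<and> snd z < 0"
  using assms
proof (induction V arbitrary: S rule: finite_induct)
  case empty
  then obtain c where c: "c \<in> S" "\<not> sat {} (\<lambda>_. 0) c" by blast
  then have "snd c < 0" by (simp add: sat_def lhs_def)
  then show ?case using gen_base[OF c(1)] by auto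
next
  case (insert v V0)
  define Z where "Z = {c\<in>S. fst c v = 0}"
  define P where "P = {c\<in>S. fst c v > 0}"
  define N where "N = {c\<in>S. fst c v < 0}"
  define comb where "comb = (\<lambda>(p::'v cstr, n::'v cstr).
      cadd (cscale (nat (- fst n v)) p) (cscale (nat (fst p v)) n))"
  define S' where "S' = Z \<union> comb ` (P \<times> N)"
  have finS': "finite S'" unfolding S'_def Z_def P_def N_def using insert.prems(1) by auto
  have S'gen: "S' \<subseteq> gen S"
  proof
    fix c assume "c \<in> S'"
    then show "c \<in> gen S"
    proof (cases "c \<in> Z")
      case True then show ?thesis using gen_base[of c S] Z_def by auto
    next
      case False
      then obtain p n where "p \<in> P" "n \<in> N" "c = comb (p, n)" using \<open>c \<in> S'\<close> S'_def by auto
      then have "p \<in> S" "n \<in> S" "c = comb (p, n)" unfolding P_def N_def by auto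
      then show ?thesis unfolding comb_def
        using gen_add[OF gen_scale[OF gen_base[of p S]] gen_scale[OF gen_base[of n S]]] by simp
    qed
  qed
  have S'v: "\<forall>c\<in>S'. fst c v = 0"
  proof
    fix c assume "c \<in> S'"
    then show "fst c v = 0"
    proof (cases "c \<in> Z")
      case True then show ?thesis using Z_def by auto
    next
      case False
      then obtain p n where "p \<in> P" "n \<in> N" "c = comb (p, n)" using \<open>c \<in> S'\<close> S'_def by auto
      then show ?thesis unfolding comb_def P_def N_def cadd_def cscale_def
        by (auto simp: algebra_simps)
    qed
  qed
  have "\<not>(\<exists>x. \<forall>c\<in>S'. sat V0 x c)"
  proof
    assume "\<exists>x. \<forall>c\<in>S'. sat V0 x c"
    then obtain x where x: "\<forall>c\<in>S'. sat V0 x c" by blast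
    define lo where "lo = (\<lambda>n. (snd n - lhs V0 x n) / of_int (fst n v))"
    define up where "up = (\<lambda>p. (snd p - lhs V0 x p) / of_int (fst p v))"
    have pair: "lo n \<le> up p" if "p \<in> P" "n \<in> N" for p n
    proof -
      have pv: "fst p v > 0" and nv: "fst n v < 0" using that P_def N_def by auto
      have "sat V0 x (comb (p,n))" using x that S'_def by auto
      then have "real (nat (- fst n v)) * lhs V0 x p + real (nat (fst p v)) * lhs V0 x n
          \<le> real (nat (- fst n v)) * snd p + real (nat (fst p v)) * snd n"
        by (simp add: sat_def comb_def lhs_cadd lhs_cscale)
      then have "(- of_int (fst n v)) * lhs V0 x p + of_int (fst p v) * lhs V0 x n
          \<le> (- of_int (fst n v)) * snd p + of_int (fst p v) * snd n"
        using pv nv by simp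
      then show ?thesis unfolding lo_def up_def using pv nv
        by (simp add: divide_simps) (smt (verit) left_diff_distrib mult.commute)
    qed
    define t where "t = (if P = {} then (if N = {} then 0 else Max (lo ` N)) else Min (up ` P))"
    have finP: "finite P" and finN: "finite N" using insert.prems(1) P_def N_def by auto
    have tup: "t \<le> up p" if "p \<in> P" for p
      using that finP by (auto simp: t_def)
    have tlo: "lo n \<le> t" if "n \<in> N" for n
    proof (cases "P = {}")
      case True then show ?thesis using that finN by (auto simp: t_def)
    next
      case False
      then show ?thesis using that finP pair by (auto simp: t_def intro: Min.boundedI)
    qed
    have "\<forall>c\<in>S. sat (insert v V0) (x(v:=t)) c"
    proof
      fix c assume cS: "c \<in> S"
      have eq: "lhs (insert v V0) (x(v:=t)) c = of_int (fst c v) * t + lhs V0 x c"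
        by (rule lhs_insert[OF insert.hyps(1,2)])
      consider "fst c v = 0" | "fst c v > 0" | "fst c v < 0" by linarith
      then show "sat (insert v V0) (x(v:=t)) c"
      proof cases
        case 1
        then have "c \<in> S'" using cS Z_def S'_def by auto
        then show ?thesis using x eq 1 by (simp add: sat_def)
      next
        case 2
        then have "t \<le> up c" using tup cS P_def by auto
        then have "t * of_int (fst c v) \<le> snd c - lhs V0 x c"
          using 2 by (simp add: up_def pos_le_divide_eq)
        then show ?thesis using eq unfolding sat_def by (simp add: mult.commute)
      next
        case 3
        then have "lo c \<le> t" using tlo cS N_def by auto
        then have "t * of_int (fst c v) \<le> snd c - lhs V0 x c"
          using 3 by (simp add: lo_def neg_divide_le_eq)
        then show ?thesis using eq unfolding sat_def by (simp add: mult.commute)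
      qed
    qed
    then show False using insert.prems(2) by blast
  qed
  then obtain z where z: "z \<in> gen S'" "\<forall>u\<in>V0. fst z u = 0" "snd z < 0"
    using insert.IH[OF finS'] by blast
  have "fst z v = 0" using gen_zero_coord[OF z(1) S'v] .
  then show ?case using z gen_mono[OF S'gen z(1)] by auto
qed


lemma vol_sum:
  assumes R: "is_rect X Y R" and fin: "finite X" "finite Y"
  shows "(\<Sum>p\<in>X\<times>Y. of_int (mult_rect R p) * f p) = Vol (\<lambda>a b. f (a,b)) R"
proof -
  obtain s1 s2 t1 t2 where Rd: "R = ((s1,s2),(t1,t2))" by (metis prod.exhaust)
  have h: "s1 \<in> X" "s2 \<in> X" "t1 \<in> Y" "t2 \<in> Y" "s1 < s2" "t1 < t2"
    using R by (auto simp: is_rect_def Rd)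
  define K where "K = {(s1,t1),(s2,t2),(s2,t1),(s1,t2)}"
  have "(\<Sum>p\<in>X\<times>Y. of_int (mult_rect R p) * f p) = (\<Sum>p\<in>K. of_int (mult_rect R p) * f p)"
    by (rule sum.mono_neutral_right) (use fin h in \<open>auto simp: K_def mult_rect_def Rd\<close>)
  also have "\<dots> = f (s1,t1) + f (s2,t2) - f (s2,t1) - f (s1,t2)"
    using h by (simp add: K_def mult_rect_def Rd)
  finally show ?thesis by (simp add: Vol_def Rd)
qed

lemma mult_add[simp]: "mult (add_mset R Rs) p = mult_rect R p + mult Rs p"
  by (simp add: mult_def)

lemma mult_empty[simp]: "mult {#} p = 0"
  by (simp add: mult_def)

lemma sum_mult_nonneg:
  assumes fin: "finite X" "finite Y" and C: "\<forall>R. is_rect X Y R \<longrightarrow> Vol C R \<ge> 0"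
  shows "(\<forall>R\<in>#Rs. is_rect X Y R) \<Longrightarrow> (\<Sum>p\<in>X\<times>Y. of_int (mult Rs p) * C (fst p) (snd p)) \<ge> 0"
proof (induction Rs)
  case empty
  then show ?case by simp
next
  case (add R Rs)
  have "(\<Sum>p\<in>X\<times>Y. of_int (mult (add_mset R Rs) p) * C (fst p) (snd p))
     = (\<Sum>p\<in>X\<times>Y. of_int (mult_rect R p) * C (fst p) (snd p))
       + (\<Sum>p\<in>X\<times>Y. of_int (mult Rs p) * C (fst p) (snd p))"
    by (simp add: algebra_simps sum.distrib)
  also have "(\<Sum>p\<in>X\<times>Y. of_int (mult_rect R p) * C (fst p) (snd p)) = Vol C R"
    using vol_sum[OF _ fin, of R "\<lambda>p. C (fst p) (snd p)"] add.prems by simp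
  finally have eq: "(\<Sum>p\<in>X\<times>Y. of_int (mult (add_mset R Rs) p) * C (fst p) (snd p))
     = Vol C R + (\<Sum>p\<in>X\<times>Y. of_int (mult Rs p) * C (fst p) (snd p))" .
  have "is_rect X Y R" using add.prems by simp
  then have v: "Vol C R \<ge> 0" using C by blast
  have "(\<Sum>p\<in>X\<times>Y. of_int (mult Rs p) * C (fst p) (snd p)) \<ge> 0" using add.IH add.prems by simp
  then show ?case using eq v by linarith
qed

definition G :: "(real \<Rightarrow> real \<Rightarrow> real) \<Rightarrow> (real \<Rightarrow> real \<Rightarrow> real) \<Rightarrow> rect multiset \<Rightarrow> real \<times> real \<Rightarrow> real" where
  "G A B Rs p = (if mult Rs p > 0 then B (fst p) (snd p) * of_int (mult Rs p)
      else if mult Rs p < 0 then A (fst p) (snd p) * of_int (mult Rs p) else 0)"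

lemma Lfun_sum:
  assumes "finite X" "finite Y"
  shows "Lfun X Y A B Rs = (\<Sum>p\<in>X\<times>Y. G A B Rs p)"
proof -
  have fin: "finite (X \<times> Y)" using assms by simp
  show ?thesis
    unfolding Lfun_def sum.inter_filter[OF fin] sum.distrib[symmetric]
    by (rule sum.cong) (auto simp: G_def)
qed

lemma pt_ineq:
  fixes a b :: real and m :: int
  assumes "a \<le> b" "m = int u - int l"
  shows "(if m > 0 then b * of_int m else if m < 0 then a * of_int m else 0) \<le> real u * b - real l * a"
proof -
  have u: "real u = real l + of_int m" using assms(2) by simp
  have l0: "real l * (b - a) \<ge> 0" using assms(1) by simp
  have u0: "real u * (b - a) \<ge> 0" using assms(1) by simp
  show ?thesis
  proof (cases "m > 0")
    case True
    then show ?thesis using l0 u by (simp add: algebra_simps)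
  next
    case False
    then show ?thesis
    proof (cases "m < 0")
      case True
      have "a * real u = a * of_int m + a * real l" using u by (simp add: algebra_simps)
      then show ?thesis using u0 True False by (simp add: algebra_simps)
    next
      case F2: False
      then have "m = 0" using False by simp
      then show ?thesis using u0 u by (simp add: algebra_simps)
    qed
  qed
qed

theorem mainTheorem14:
  fixes X Y :: "real set" and A B :: "real \<Rightarrow> real \<Rightarrow> real"
  assumes "mesh X Y"
    and "discrete_quasi_copula X Y A" and "discrete_quasi_copula X Y B"
    and "\<forall>x\<in>X. \<forall>y\<in>Y. A x y \<le> B x y"
  shows "(\<exists>C. discrete_copula X Y C \<and> (\<forall>x\<in>X. \<forall>y\<in>Y. A x y \<le> C x y \<and> C x y \<le> B x y))
     \<longleftrightarrow> (\<forall>Rs. (\<forall>R\<in>#Rs. is_rect X Y R) \<longrightarrow> Lfun X Y A B Rs \<ge> 0)"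
proof -
  have finX: "finite X" and finY: "finite Y" and X01: "0 \<in> X" "1 \<in> X" and Y01: "0 \<in> Y" "1 \<in> Y"
    using assms(1) by (auto simp: mesh_def grid_def)
  have finP: "finite (X \<times> Y)" using finX finY by simp
  show ?thesis
  proof
    assume "\<exists>C. discrete_copula X Y C \<and> (\<forall>x\<in>X. \<forall>y\<in>Y. A x y \<le> C x y \<and> C x y \<le> B x y)"
    then obtain C where C: "discrete_copula X Y C" "\<forall>x\<in>X. \<forall>y\<in>Y. A x y \<le> C x y \<and> C x y \<le> B x y"
      by blast
    show "\<forall>Rs. (\<forall>R\<in>#Rs. is_rect X Y R) \<longrightarrow> Lfun X Y A B Rs \<ge> 0"
    proof (intro allI impI)
      fix Rs assume Rs: "\<forall>R\<in>#Rs. is_rect X Y R"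
      have "0 \<le> (\<Sum>p\<in>X\<times>Y. of_int (mult Rs p) * C (fst p) (snd p))"
        using sum_mult_nonneg[OF finX finY _ Rs] C(1) by (simp add: discrete_copula_def)
      also have "\<dots> \<le> (\<Sum>p\<in>X\<times>Y. G A B Rs p)"
      proof (rule sum_mono)
        fix p assume p: "p \<in> X \<times> Y"
        then have ac: "A (fst p) (snd p) \<le> C (fst p) (snd p)" "C (fst p) (snd p) \<le> B (fst p) (snd p)"
          using C(2) by auto
        show "of_int (mult Rs p) * C (fst p) (snd p) \<le> G A B Rs p"
        proof (cases "mult Rs p > 0")
          case True
          then show ?thesis using mult_right_mono[OF ac(2), of "of_int (mult Rs p)"]
            by (simp add: G_def mult.commute)
        next
          case False
          then show ?thesis using mult_right_mono_neg[OF ac(1), of "of_int (mult Rs p)"]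
            by (auto simp: G_def mult.commute)
        qed
      qed
      finally show "Lfun X Y A B Rs \<ge> 0" using Lfun_sum[OF finX finY] by simp
    qed
  next
    assume H: "\<forall>Rs. (\<forall>R\<in>#Rs. is_rect X Y R) \<longrightarrow> Lfun X Y A B Rs \<ge> 0"
    show "\<exists>C. discrete_copula X Y C \<and> (\<forall>x\<in>X. \<forall>y\<in>Y. A x y \<le> C x y \<and> C x y \<le> B x y)"
    proof (rule ccontr)
      assume noC: "\<not> ?thesis"
      define P where "P = X \<times> Y"
      define e where "e = (\<lambda>(p::real\<times>real) q. if q = p then (1::int) else 0)"
      define cU where "cU = (\<lambda>p. (e p, B (fst p) (snd p)))"
      define cL where "cL = (\<lambda>p. ((\<lambda>q. - e p q), - A (fst p) (snd p)))"
      define cR where "cR = (\<lambda>R. ((\<lambda>q. - mult_rect R q), 0::real))"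
      define RS where "RS = {R. is_rect X Y R}"
      define S where "S = cU ` P \<union> cL ` P \<union> cR ` RS"
      have "RS \<subseteq> (X \<times> X) \<times> (Y \<times> Y)"
        by (auto simp: RS_def is_rect_def split: prod.splits)
      then have finRS: "finite RS" using finX finY finite_subset by blast
      have finS: "finite S" unfolding S_def P_def using finRS finP by simp
      have lhs_e: "lhs P x (cU p) = x p" "lhs P x (cL p) = - x p" if "p \<in> P" for x p
      proof -
        have "lhs P x (cU p) = (\<Sum>q\<in>P. if q = p then x q else 0)"
          unfolding lhs_def cU_def e_def by (rule sum.cong) auto
        then show "lhs P x (cU p) = x p" using that finP P_def by simp
        have "lhs P x (cL p) = - (\<Sum>q\<in>P. if q = p then x q else 0)"
          unfolding lhs_def cL_def e_def sum_negf[symmetric] by (rule sum.cong) auto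
        then show "lhs P x (cL p) = - x p" using that finP P_def by simp
      qed
      have lhs_R: "lhs P x (cR R) = - Vol (\<lambda>a b. x (a,b)) R" if "R \<in> RS" for x R
      proof -
        have "lhs P x (cR R) = - (\<Sum>p\<in>X\<times>Y. of_int (mult_rect R p) * x p)"
          unfolding lhs_def cR_def P_def sum_negf[symmetric] by (rule sum.cong) auto
        then show ?thesis using vol_sum[OF _ finX finY, of R x] that RS_def by simp
      qed
      have infeas: "\<not>(\<exists>x. \<forall>c\<in>S. sat P x c)"
      proof
        assume "\<exists>x. \<forall>c\<in>S. sat P x c"
        then obtain x where x: "\<forall>c\<in>S. sat P x c" by blast
        define C where "C = (\<lambda>a b. x (a,b))"
        have bnd: "A a b \<le> C a b \<and> C a b \<le> B a b" if "a \<in> X" "b \<in> Y" for a b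
        proof -
          have p: "(a,b) \<in> P" using that P_def by simp
          have "sat P x (cU (a,b))" "sat P x (cL (a,b))" using x p S_def by auto
          then show ?thesis using lhs_e[OF p, of x] unfolding sat_def C_def
            by (simp add: cU_def cL_def)
        qed
        have qa: "grounded X Y A" "neutral_one X Y A" "grounded X Y B" "neutral_one X Y B"
          using assms(2,3) by (auto simp: discrete_quasi_copula_def)
        have "grounded X Y C"
          unfolding grounded_def
        proof (intro conjI ballI)
          fix a assume a: "a \<in> X"
          show "C a 0 = 0" using bnd[OF a Y01(1)] a qa by (auto simp: grounded_def)
        next
          fix b assume b: "b \<in> Y"
          show "C 0 b = 0" using bnd[OF X01(1) b] b qa by (auto simp: grounded_def)
        qed
        moreover have "neutral_one X Y C"
          unfolding neutral_one_def
        proof (intro conjI ballI)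
          fix a assume a: "a \<in> X"
          show "C a 1 = a" using bnd[OF a Y01(2)] a qa by (auto simp: neutral_one_def)
        next
          fix b assume b: "b \<in> Y"
          show "C 1 b = b" using bnd[OF X01(2) b] b qa by (auto simp: neutral_one_def)
        qed
        moreover have "\<forall>R. is_rect X Y R \<longrightarrow> Vol C R \<ge> 0"
        proof (intro allI impI)
          fix R assume "is_rect X Y R"
          then have R: "R \<in> RS" using RS_def by simp
          then have "sat P x (cR R)" using x S_def by auto
          then show "Vol C R \<ge> 0" using lhs_R[OF R, of x] unfolding sat_def C_def
            by (simp add: cR_def)
        qed
        ultimately have "discrete_copula X Y C" by (simp add: discrete_copula_def)
        then show False using noC bnd by blast
      qed
      obtain z where z: "z \<in> gen S" "\<forall>v\<in>P. fst z v = 0" "snd z < 0"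
        using FM[OF _ finS infeas] finP P_def by blast
      have "\<exists>Rs u l. (\<forall>R\<in>#Rs. is_rect X Y R) \<and> (\<forall>q. fst z q = int (u q) - int (l q) - mult Rs q)
             \<and> snd z = (\<Sum>p\<in>P. real (u p) * B (fst p) (snd p) - real (l p) * A (fst p) (snd p))"
        using z(1)
      proof (induction rule: gen.induct)
        case gen_zero
        show ?case by (rule exI[of _ "{#}"], rule exI[of _ "\<lambda>_. 0"], rule exI[of _ "\<lambda>_. 0"])
          (simp add: czero_def)
      next
        case (gen_step c z)
        then obtain Rs u l where IH: "\<forall>R\<in>#Rs. is_rect X Y R" "\<forall>q. fst z q = int (u q) - int (l q) - mult Rs q"
          "snd z = (\<Sum>p\<in>P. real (u p) * B (fst p) (snd p) - real (l p) * A (fst p) (snd p))" by blast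
        from gen_step(1) consider (U) p where "p \<in> P" "c = cU p" | (L) p where "p \<in> P" "c = cL p"
          | (R) R where "R \<in> RS" "c = cR R" unfolding S_def by blast
        then show ?case
        proof cases
          case U
          define u' where "u' = (\<lambda>q. u q + (if q = p then 1 else 0))"
          have "(\<Sum>q\<in>P. real (u' q) * B (fst q) (snd q) - real (l q) * A (fst q) (snd q))
              = (\<Sum>q\<in>P. real (u q) * B (fst q) (snd q) - real (l q) * A (fst q) (snd q))
                + (\<Sum>q\<in>P. if q = p then B (fst q) (snd q) else 0)"
            unfolding sum.distrib[symmetric] by (rule sum.cong) (auto simp: u'_def algebra_simps)
          also have "(\<Sum>q\<in>P. if q = p then B (fst q) (snd q) else 0) = B (fst p) (snd p)"
            using U finP P_def by simp
          finally have s: "(\<Sum>q\<in>P. real (u' q) * B (fst q) (snd q) - real (l q) * A (fst q) (snd q))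
              = snd z + B (fst p) (snd p)" using IH(3) by simp
          show ?thesis
            by (rule exI[of _ Rs], rule exI[of _ u'], rule exI[of _ l])
              (use IH s U in \<open>auto simp: cadd_def cU_def e_def u'_def\<close>)
        next
          case L
          define l' where "l' = (\<lambda>q. l q + (if q = p then 1 else 0))"
          have "(\<Sum>q\<in>P. real (u q) * B (fst q) (snd q) - real (l' q) * A (fst q) (snd q))
              = (\<Sum>q\<in>P. real (u q) * B (fst q) (snd q) - real (l q) * A (fst q) (snd q))
                - (\<Sum>q\<in>P. if q = p then A (fst q) (snd q) else 0)"
            unfolding sum_subtractf[symmetric] by (rule sum.cong) (auto simp: l'_def algebra_simps)
          also have "(\<Sum>q\<in>P. if q = p then A (fst q) (snd q) else 0) = A (fst p) (snd p)"
            using L finP P_def by simp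
          finally have s: "(\<Sum>q\<in>P. real (u q) * B (fst q) (snd q) - real (l' q) * A (fst q) (snd q))
              = snd z - A (fst p) (snd p)" using IH(3) by simp
          show ?thesis
            by (rule exI[of _ Rs], rule exI[of _ u], rule exI[of _ l'])
              (use IH s L in \<open>auto simp: cadd_def cL_def e_def l'_def\<close>)
        next
          case R
          show ?thesis
            by (rule exI[of _ "add_mset R Rs"], rule exI[of _ u], rule exI[of _ l])
              (use IH R in \<open>auto simp: cadd_def cR_def RS_def\<close>)
        qed
      qed
      then obtain Rs u l where rep: "\<forall>R\<in>#Rs. is_rect X Y R" "\<forall>q. fst z q = int (u q) - int (l q) - mult Rs q"
          "snd z = (\<Sum>p\<in>P. real (u p) * B (fst p) (snd p) - real (l p) * A (fst p) (snd p))" by blast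
      have "Lfun X Y A B Rs = (\<Sum>p\<in>P. G A B Rs p)" using Lfun_sum[OF finX finY] P_def by simp
      also have "\<dots> \<le> snd z"
        unfolding rep(3)
      proof (rule sum_mono)
        fix p assume p: "p \<in> P"
        have "fst z p = int (u p) - int (l p) - mult Rs p" using rep(2) by blast
        moreover have "fst z p = 0" using z(2) p by blast
        ultimately have m: "mult Rs p = int (u p) - int (l p)" by linarith
        have ab: "A (fst p) (snd p) \<le> B (fst p) (snd p)" using assms(4) p P_def by auto
        show "G A B Rs p \<le> real (u p) * B (fst p) (snd p) - real (l p) * A (fst p) (snd p)"
          using pt_ineq[OF ab m] by (simp add: G_def)
      qed
      finally have "Lfun X Y A B Rs < 0" using z(3) by simp
      then show False using H rep(1) by force
    qed
  qed
qed

end
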